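(* Let $X_1,\dots,X_m\subseteq\mathbb{R}^d$ be a family of nonempty finite sets in general position and let $n\ge1$ be an integer. Then there exists $\delta>0$ such that the following holds: if $X_1^{(n)}$ is obtained from $X_1$ by replacing each point $x\in X_1$ by a set (cloud) of $n$ points each within distance $\delta$ of $x$, in such a way that the family $X_1^{(n)},X_2,\dots,X_m$ is in general position, then \[ c(X_1,\dots,X_m)=c(X_1^{(n)},X_2,\dots,X_m). \]
   Context: A family of finite sets $X_1,\dots,X_m\subseteq\mathbb{R}^d$ is in general position if the sets are pairwise disjoint and their union is a set of points in general position. Sets $Y_1,\dots,Y_{d+1}\subseteq\mathbb{R}^d$ have the same-type property if for every choice $y_1\in Y_1,\dots,y_{d+1}\in Y_{d+1}$ the orientation of $(y_1,\dots,y_{d+1})$ is the same; sets $Y_1,\dots,Y_m$ have the same-type property if every $d+1$ of them do. For a family $X_1,\dots,X_m$ of nonempty finite sets in general position, $c(X_1,\dots,X_m)$ is the largest $c$ such that there exist $Y_i\subseteq X_i$ with the same-type property and $|Y_i|\ge c|X_i|$ for all $i$. *)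

theory Defs
  imports "HOL-Analysis.Analysis"
begin

definition points_gen_pos :: "(real^'d) set \<Rightarrow> bool" where
  "points_gen_pos P \<longleftrightarrow>
     (\<forall>S. S \<subseteq> P \<and> card S \<le> CARD('d) + 1 \<longrightarrow> \<not> affine_dependent S)"

definition family_gen_pos :: "(nat \<Rightarrow> (real^'d) set) \<Rightarrow> nat \<Rightarrow> bool" where
  "family_gen_pos X m \<longleftrightarrow>
     (\<forall>i<m. \<forall>j<m. i \<noteq> j \<longrightarrow> X i \<inter> X j = {}) \<and> points_gen_pos (\<Union>i<m. X i)"

text \<open>Orientation of a (d+1)-tuple of points indexed by 'd option (None being the
  last point): sign of det of the matrix with rows y_i - y_{d+1}, equivalently
  of the (d+1)x(d+1) matrix with rows (y_i, 1).\<close>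
definition orientation :: "('d option \<Rightarrow> real^'d) \<Rightarrow> real" where
  "orientation y = sgn (det (\<chi> i j. y (Some i) $ j - y None $ j))"

definition same_type :: "(nat \<Rightarrow> (real^'d) set) \<Rightarrow> nat \<Rightarrow> bool" where
  "same_type Y m \<longleftrightarrow>
     (\<forall>g :: 'd option \<Rightarrow> nat. inj g \<and> range g \<subseteq> {..<m} \<longrightarrow>
        (\<forall>y y'. (\<forall>k. y k \<in> Y (g k)) \<and> (\<forall>k. y' k \<in> Y (g k)) \<longrightarrow>
            orientation y = orientation y'))"

definition same_type_const :: "(nat \<Rightarrow> (real^'d) set) \<Rightarrow> nat \<Rightarrow> real" where
  "same_type_const X m = (GREATEST c. \<exists>Y. (\<forall>i<m. Y i \<subseteq> X i \<and> real (card (Y i)) \<ge> c * real (card (X i)))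
                                   \<and> same_type Y m)"

end

theory Submission imports Defs begin

definition omat :: "('d option \<Rightarrow> real^'d) \<Rightarrow> real^'d^'d" where
  "omat y = (\<chi> i j. y (Some i) $ j - y None $ j)"

lemma orientation_omat: "orientation y = sgn (det (omat y))"
  by (simp add: orientation_def omat_def)

lemma det_omat_nz:
  fixes z :: "'d option \<Rightarrow> real^'d"
  assumes "inj z" "\<not> affine_dependent (range z)"
  shows "det (omat z) \<noteq> 0"
proof -
  have "\<forall>c. (\<Sum>i\<in>UNIV. c i *s row i (omat z)) = 0 \<longrightarrow> (\<forall>i. c i = 0)"
  proof (rule allI, rule impI)
    fix c :: "'d \<Rightarrow> real"
    assume h: "(\<Sum>i\<in>UNIV. c i *s row i (omat z)) = 0"
    have rows: "row i (omat z) = z (Some i) - z None" for i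
      by (simp add: row_def omat_def vec_eq_iff)
    define u where "u = (\<lambda>k::'d option. case k of None \<Rightarrow> - (\<Sum>i\<in>UNIV. c i) | Some i \<Rightarrow> c i)"
    have sumopt: "(\<Sum>k\<in>UNIV. f k) = f None + (\<Sum>i\<in>UNIV. f (Some i))" for f :: "'d option \<Rightarrow> 'b::comm_monoid_add"
      by (subst UNIV_option_conv) (simp add: sum.reindex)
    have s1: "(\<Sum>k\<in>UNIV. u k) = 0" by (simp add: sumopt u_def)
    have "(\<Sum>k\<in>UNIV. u k *\<^sub>R z k) = (\<Sum>i\<in>UNIV. c i *\<^sub>R (z (Some i) - z None))"
      by (simp add: sumopt u_def scaleR_diff_right sum_subtractf scaleR_sum_left)
    also have "\<dots> = 0" using h by (simp add: rows scalar_mult_eq_scaleR)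
    finally have s2: "(\<Sum>k\<in>UNIV. u k *\<^sub>R z k) = 0" .
    define U where "U = u \<circ> inv z"
    have s1': "sum U (range z) = 0" using s1 assms(1) by (simp add: sum.reindex U_def)
    have s2': "(\<Sum>v\<in>range z. U v *\<^sub>R v) = 0" using s2 assms(1) by (simp add: sum.reindex U_def)
    show "\<forall>i. c i = 0"
    proof (rule ccontr)
      assume "\<not> (\<forall>i. c i = 0)"
      then obtain i where "c i \<noteq> 0" by auto
      then have "U (z (Some i)) \<noteq> 0" using assms(1) by (simp add: U_def u_def)
      then have "affine_dependent (range z)"
        unfolding affine_dependent_explicit using s1' s2' by (intro exI[of _ "range z"] exI[of _ U]) auto
      then show False using assms(2) by simp
    qed
  qed
  then have "invertible (omat z)"
    by (simp add: invertible_right_inverse matrix_right_invertible_independent_rows)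
  then show ?thesis by (simp add: invertible_det_nz)
qed

lemma cont_det_omat:
  fixes z :: "'d option \<Rightarrow> real^'d"
  shows "continuous (at c) (\<lambda>p. det (omat (z(k0 := p))))"
proof -
  have e: "continuous (at c) (\<lambda>p. (z(k0 := p)) k $ j)" for k j
    by (cases "k = k0") (auto intro!: continuous_intros)
  show ?thesis
    unfolding det_def omat_def
    by (simp del: fun_upd_apply) (intro continuous_intros e)
qed


lemma sgn_close: "\<bar>a - b\<bar> < \<bar>b\<bar> \<Longrightarrow> sgn a = sgn (b::real)"
  by (auto simp: sgn_real_def split: if_splits)

lemma ev_pos: "eventually P (at_right (0::real)) \<Longrightarrow> \<exists>\<delta>>0. P \<delta>"
  unfolding eventually_at_right_field
  by (metis half_gt_zero less_add_same_cancel1 field_sum_of_halves)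

lemma key:
  fixes U :: "(real^'d) set"
  assumes "finite U" "points_gen_pos U"
  shows "eventually (\<lambda>\<delta>. \<forall>z k0 p. inj z \<and> range z \<subseteq> U \<and> dist p (z k0) < \<delta>
            \<longrightarrow> orientation (z(k0:=p)) = orientation z) (at_right 0)"
proof -
  define T where "T = {z :: 'd option \<Rightarrow> real^'d. inj z \<and> range z \<subseteq> U}"
  have "T \<subseteq> PiE UNIV (\<lambda>_. U)" by (auto simp: T_def PiE_def extensional_def)
  then have fT: "finite T" by (rule finite_subset[OF _ finite_PiE]) (auto simp: assms(1))
  define Q where "Q = (\<lambda>\<delta> (y :: ('d option \<Rightarrow> real^'d) \<times> 'd option). \<forall>p. dist p (fst y (snd y)) < \<delta>
        \<longrightarrow> orientation ((fst y)(snd y:=p)) = orientation (fst y))"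
  have ev: "\<forall>y\<in>T \<times> (UNIV :: 'd option set). eventually (\<lambda>\<delta>. Q \<delta> y) (at_right 0)"
  proof
    fix y assume yT: "y \<in> T \<times> (UNIV :: 'd option set)"
    obtain z k0 where y: "y = (z, k0)" by (cases y)
    have zT: "inj z" "range z \<subseteq> U" using yT y by (auto simp: T_def)
    have "card (range z) \<le> card (UNIV :: 'd option set)" by (rule card_image_le) simp
    also have "\<dots> = CARD('d) + 1" by (simp add: UNIV_option_conv card_image)
    finally have "\<not> affine_dependent (range z)"
      using assms(2) zT unfolding points_gen_pos_def by blast
    then have nz: "det (omat z) \<noteq> 0" using det_omat_nz zT(1) by blast
    then have "\<bar>det (omat z)\<bar> > 0" by simp
    then obtain d where d: "d > 0" "\<forall>p. dist p (z k0) < d \<longrightarrow>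
        dist (det (omat (z(k0 := p)))) (det (omat (z(k0 := z k0)))) < \<bar>det (omat z)\<bar>"
      using cont_det_omat[of "z k0" z k0] unfolding continuous_at_eps_delta by blast
    show "eventually (\<lambda>\<delta>. Q \<delta> y) (at_right 0)"
      unfolding eventually_at_right_field
    proof (intro exI[of _ d] conjI allI impI)
      fix \<delta> :: real assume "0 < \<delta>" "\<delta> < d"
      show "Q \<delta> y" unfolding Q_def y
      proof (intro allI impI)
        fix p assume "dist p (fst (z, k0) (snd (z, k0))) < \<delta>"
        then have "dist p (z k0) < d" using \<open>\<delta> < d\<close> by simp
        then have "\<bar>det (omat (z(k0 := p))) - det (omat z)\<bar> < \<bar>det (omat z)\<bar>"
          using d by (simp add: dist_real_def)
        then show "orientation ((fst (z, k0))(snd (z, k0) := p)) = orientation (fst (z, k0))"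
          by (simp add: orientation_omat sgn_close)
      qed
    qed (rule d(1))
  qed
  have "eventually (\<lambda>\<delta>. \<forall>y\<in>T \<times> (UNIV :: 'd option set). Q \<delta> y) (at_right 0)"
    by (rule eventually_ball_finite) (use fT ev in auto)
  then show ?thesis
    by (rule eventually_mono) (auto simp: Q_def T_def)
qed

lemma sep:
  fixes A :: "(real^'d) set"
  assumes "finite A"
  shows "eventually (\<lambda>\<delta>. \<forall>x\<in>A. \<forall>x'\<in>A. x \<noteq> x' \<longrightarrow> 2 * \<delta> < dist x x') (at_right 0)"
proof (rule eventually_ball_finite[OF assms], rule ballI, rule eventually_ball_finite[OF assms], rule ballI)
  fix x x' assume "x \<in> A" "x' \<in> A"
  show "eventually (\<lambda>\<delta>. x \<noteq> x' \<longrightarrow> 2 * \<delta> < dist x x') (at_right 0)"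
  proof (cases "x = x'")
    case False
    then have "dist x x' / 2 > 0" by simp
    then show ?thesis unfolding eventually_at_right_field
      by (intro exI[of _ "dist x x' / 2"]) auto
  qed simp
qed

lemma transversal_inj:
  fixes X Z :: "nat \<Rightarrow> (real^'d) set"
  assumes "family_gen_pos X m" "\<forall>i<m. Z i \<subseteq> X i" "inj g" "range g \<subseteq> {..<m}"
    "\<forall>k. z k \<in> Z (g k)"
  shows "inj z" "range z \<subseteq> (\<Union>i<m. X i)"
proof -
  have zg: "g k < m" for k using assms(4) by auto
  have zX: "z k \<in> X (g k)" "g k < m" for k using assms(2,5) zg by blast+
  show "inj z"
  proof (rule injI)
    fix k k' assume "z k = z k'"
    then have "X (g k) \<inter> X (g k') \<noteq> {}" using zX by (metis disjoint_iff)
    then have "g k = g k'" using assms(1) zX unfolding family_gen_pos_def by blast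
    then show "k = k'" using assms(3) by (simp add: inj_eq)
  qed
  show "range z \<subseteq> (\<Union>i<m. X i)" using zX by auto
qed


theorem lemma3:
  fixes X :: "nat \<Rightarrow> (real^'d) set" and m n :: nat
  assumes "m \<ge> 1"
    and "\<forall>i<m. finite (X i) \<and> X i \<noteq> {}"
    and "family_gen_pos X m"
    and "n \<ge> 1"
  shows "\<exists>\<delta>>0. \<forall>C :: real^'d \<Rightarrow> (real^'d) set.
           (\<forall>x\<in>X 0. finite (C x) \<and> card (C x) = n \<and> (\<forall>y\<in>C x. dist y x < \<delta>))
           \<and> family_gen_pos (X(0 := (\<Union>x\<in>X 0. C x))) m
           \<longrightarrow> same_type_const X m = same_type_const (X(0 := (\<Union>x\<in>X 0. C x))) m"
proof -
  define U where "U = (\<Union>i<m. X i)"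
  have fU: "finite U" using assms(2) by (auto simp: U_def)
  have gU: "points_gen_pos U" using assms(3) by (simp add: family_gen_pos_def U_def)
  have m0: "0 < m" using assms(1) by simp
  have fX0: "finite (X 0)" using assms(2) m0 by blast
  have disjX: "\<And>i j. i < m \<Longrightarrow> j < m \<Longrightarrow> i \<noteq> j \<Longrightarrow> X i \<inter> X j = {}"
    using assms(3) by (simp add: family_gen_pos_def)
  have "eventually (\<lambda>\<delta>. (\<forall>z k0 p. inj z \<and> range z \<subseteq> U \<and> dist p (z k0) < \<delta>
            \<longrightarrow> orientation (z(k0:=p)) = orientation z) \<and>
          (\<forall>x\<in>X 0. \<forall>x'\<in>X 0. x \<noteq> x' \<longrightarrow> 2 * \<delta> < dist x x')) (at_right 0)"
    (is "eventually ?P _")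
    by (intro eventually_conj key sep fU gU fX0)
  from ev_pos[OF this] obtain \<delta> :: real where dP: "\<delta> > 0 \<and> ?P \<delta>"
    by (elim exE) (rule that)
  have dpos: "\<delta> > 0" and KS: "?P \<delta>" using dP by (rule conjunct1, rule conjunct2)
  have K: "\<And>z k0 p. inj z \<Longrightarrow> range z \<subseteq> U \<Longrightarrow> dist p (z k0) < \<delta> \<Longrightarrow>
            orientation (z(k0:=p)) = orientation z"
    using conjunct1[OF KS] by blast
  have S: "\<And>x x'. x \<in> X 0 \<Longrightarrow> x' \<in> X 0 \<Longrightarrow> x \<noteq> x' \<Longrightarrow> 2 * \<delta> < dist x x'"
    using conjunct2[OF KS] by blast
  show ?thesis
  proof (intro exI[of _ \<delta>] conjI allI impI dpos, elim conjE)
    fix C :: "real^'d \<Rightarrow> (real^'d) set"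
    assume H: "\<forall>x\<in>X 0. finite (C x) \<and> card (C x) = n \<and> (\<forall>y\<in>C x. dist y x < \<delta>)"
    define X' where "X' = X(0 := (\<Union>x\<in>X 0. C x))"
    have disjC: "C x \<inter> C x' = {}" if "x \<in> X 0" "x' \<in> X 0" "x \<noteq> x'" for x x'
    proof (rule ccontr)
      assume "C x \<inter> C x' \<noteq> {}"
      then obtain p where p: "p \<in> C x" "p \<in> C x'" by blast
      have "dist x x' \<le> dist x p + dist x' p" by (rule dist_triangle2)
      also have "\<dots> < 2 * \<delta>"
      proof -
        have "dist x p < \<delta>" "dist x' p < \<delta>" using H p that by (auto simp: dist_commute)
        then show ?thesis by linarith
      qed
      finally show False using S[OF that] by simp
    qed
    have cardU: "card (\<Union>x\<in>A. C x) = n * card A" if "A \<subseteq> X 0" for A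
    proof -
      have fA: "finite A" using that fX0 finite_subset by blast
      have "card (\<Union>x\<in>A. C x) = (\<Sum>x\<in>A. card (C x))"
      proof -
        have dA: "\<forall>i\<in>A. \<forall>j\<in>A. i \<noteq> j \<longrightarrow> C i \<inter> C j = {}" using that disjC by blast
        show ?thesis by (rule card_UN_disjoint[OF fA _ dA]) (use H that in auto)
      qed
      also have "\<dots> = (\<Sum>x\<in>A. n)" using H that by (intro sum.cong) auto
      finally show ?thesis by simp
    qed
    have X'i: "X' i = X i" if "i \<noteq> 0" for i using that by (simp add: X'_def)
    have eqv: "(\<exists>Y. (\<forall>i<m. Y i \<subseteq> X i \<and> real (card (Y i)) \<ge> c * real (card (X i))) \<and> same_type Y m)
       \<longleftrightarrow> (\<exists>Y. (\<forall>i<m. Y i \<subseteq> X' i \<and> real (card (Y i)) \<ge> c * real (card (X' i))) \<and> same_type Y m)"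
      for c
    proof
      assume "\<exists>Y. (\<forall>i<m. Y i \<subseteq> X i \<and> real (card (Y i)) \<ge> c * real (card (X i))) \<and> same_type Y m"
      then obtain Y where Y: "\<forall>i<m. Y i \<subseteq> X i \<and> real (card (Y i)) \<ge> c * real (card (X i))"
        and st: "same_type Y m" by blast
      define Y' where "Y' = Y(0 := (\<Union>x\<in>Y 0. C x))"
      have Y0: "Y 0 \<subseteq> X 0" and c0: "real (card (Y 0)) \<ge> c * real (card (X 0))" using Y m0 by auto
      have "\<forall>i<m. Y' i \<subseteq> X' i \<and> real (card (Y' i)) \<ge> c * real (card (X' i))"
      proof (intro allI impI)
        fix i assume "i < m"
        show "Y' i \<subseteq> X' i \<and> real (card (Y' i)) \<ge> c * real (card (X' i))"
        proof (cases "i = 0")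
          case True
          have "c * real (card (X' i)) = real n * (c * real (card (X 0)))"
            using True cardU[of "X 0"] by (simp add: X'_def)
          also have "\<dots> \<le> real n * real (card (Y 0))" using c0 by (intro mult_left_mono) auto
          also have "\<dots> = real (card (Y' i))" using True cardU[OF Y0] by (simp add: Y'_def)
          finally show ?thesis using True Y0 by (auto simp: Y'_def X'_def)
        next
          case False
          then show ?thesis using Y \<open>i < m\<close> by (simp add: Y'_def X'i)
        qed
      qed
      moreover have "same_type Y' m"
        unfolding same_type_def
      proof (intro allI impI, elim conjE)
        fix g :: "'d option \<Rightarrow> nat" and y y'
        assume g: "inj g" "range g \<subseteq> {..<m}"
        have red: "\<exists>z. (\<forall>k. z k \<in> Y (g k)) \<and> orientation y = orientation z"
          if yY: "\<forall>k. y k \<in> Y' (g k)" for y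
        proof -
          define cen where "cen = (\<lambda>p. SOME x. x \<in> Y 0 \<and> p \<in> C x)"
          define z where "z = (\<lambda>k. if g k = 0 then cen (y k) else y k)"
          have cen: "cen (y k) \<in> Y 0 \<and> y k \<in> C (cen (y k))" if "g k = 0" for k
          proof -
            have "y k \<in> Y' (g k)" using yY by blast
            then have "\<exists>x. x \<in> Y 0 \<and> y k \<in> C x" using that by (auto simp: Y'_def)
            then show ?thesis unfolding cen_def by (rule someI_ex)
          qed
          have zY: "\<forall>k. z k \<in> Y (g k)"
          proof
            fix k show "z k \<in> Y (g k)"
              using cen[of k] yY[rule_format, of k] by (cases "g k = 0") (auto simp: z_def Y'_def)
          qed
          have "orientation y = orientation z"
          proof (cases "\<exists>k0. g k0 = 0")
            case True
            then obtain k0 where k0: "g k0 = 0" by blast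
            have "y = z(k0 := y k0)"
            proof
              fix k show "y k = (z(k0 := y k0)) k"
                using k0 g(1) injD[OF g(1), of k k0] by (cases "k = k0") (auto simp: z_def)
            qed
            moreover have "orientation (z(k0 := y k0)) = orientation z"
            proof (rule K)
              have YX: "\<forall>i<m. Y i \<subseteq> X i" using Y by blast
              show "inj z" "range z \<subseteq> U"
                using transversal_inj[OF assms(3) YX g zY] by (simp_all add: U_def)
              have "z k0 \<in> X 0" using cen[OF k0] Y0 k0 by (auto simp: z_def)
              then show "dist (y k0) (z k0) < \<delta>" using H cen[OF k0] k0 by (auto simp: z_def)
            qed
            ultimately show ?thesis by simp
          next
            case False
            have "y = z"
            proof
              fix k
              have "g k \<noteq> 0" using False by simp
              then show "y k = z k" by (simp add: z_def)
            qed
            then show ?thesis by simp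
          qed
          then show ?thesis using zY by blast
        qed
        assume "\<forall>k. y k \<in> Y' (g k)" "\<forall>k. y' k \<in> Y' (g k)"
        then obtain z z' where "\<forall>k. z k \<in> Y (g k)" "orientation y = orientation z"
           "\<forall>k. z' k \<in> Y (g k)" "orientation y' = orientation z'" using red by meson
        then show "orientation y = orientation y'" using st g unfolding same_type_def by metis
      qed
      ultimately show "\<exists>Y. (\<forall>i<m. Y i \<subseteq> X' i \<and> real (card (Y i)) \<ge> c * real (card (X' i))) \<and> same_type Y m"
        by blast
    next
      assume "\<exists>Y. (\<forall>i<m. Y i \<subseteq> X' i \<and> real (card (Y i)) \<ge> c * real (card (X' i))) \<and> same_type Y m"
      then obtain Y' where Y': "\<forall>i<m. Y' i \<subseteq> X' i \<and> real (card (Y' i)) \<ge> c * real (card (X' i))"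
        and st: "same_type Y' m" by blast
      define Y where "Y = Y'(0 := {x \<in> X 0. C x \<inter> Y' 0 \<noteq> {}})"
      have Y0: "Y 0 \<subseteq> X 0" by (simp add: Y_def)
      have Y'0: "Y' 0 \<subseteq> (\<Union>x\<in>X 0. C x)" and c0: "real (card (Y' 0)) \<ge> c * real (card (X' 0))"
      proof -
        have "Y' 0 \<subseteq> X' 0 \<and> real (card (Y' 0)) \<ge> c * real (card (X' 0))" using Y' m0 by blast
        then show "Y' 0 \<subseteq> (\<Union>x\<in>X 0. C x)" "real (card (Y' 0)) \<ge> c * real (card (X' 0))"
          by (simp_all add: X'_def)
      qed
      have YX: "\<forall>i<m. Y i \<subseteq> X i"
      proof (intro allI impI)
        fix i assume "i < m"
        show "Y i \<subseteq> X i"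
        proof (cases "i = 0")
          case False
          then have "Y i = Y' i" "X' i = X i" by (simp_all add: Y_def X'_def)
          then show ?thesis using Y' \<open>i < m\<close> by metis
        qed (use Y0 in simp)
      qed
      have "\<forall>i<m. Y i \<subseteq> X i \<and> real (card (Y i)) \<ge> c * real (card (X i))"
      proof (intro allI impI conjI)
        fix i assume "i < m"
        then show "Y i \<subseteq> X i" using YX by blast
        show "real (card (Y i)) \<ge> c * real (card (X i))"
        proof (cases "i = 0")
          case True
          have "Y' 0 \<subseteq> (\<Union>x\<in>Y 0. C x)"
          proof
            fix p assume "p \<in> Y' 0"
            then obtain x where "x \<in> X 0" "p \<in> C x" using Y'0 by blast
            then show "p \<in> (\<Union>x\<in>Y 0. C x)" using \<open>p \<in> Y' 0\<close> by (auto simp: Y_def)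
          qed
          moreover have "finite (\<Union>x\<in>Y 0. C x)"
            using Y0 fX0 H by (auto intro: finite_subset)
          ultimately have "card (Y' 0) \<le> card (\<Union>x\<in>Y 0. C x)" by (rule card_mono[rotated])
          also have "\<dots> = n * card (Y 0)" using cardU[OF Y0] .
          finally have "card (Y' 0) \<le> n * card (Y 0)" .
          then have r1: "real (card (Y' 0)) \<le> real n * real (card (Y 0))"
            by (metis of_nat_le_iff of_nat_mult)
          have r2: "c * real (card (X' 0)) = real n * (c * real (card (X 0)))"
            using cardU[of "X 0"] by (simp add: X'_def)
          have "real n * (c * real (card (X 0))) \<le> real n * real (card (Y 0))"
            using r1 r2 c0 by linarith
          then show ?thesis using True assms(4) by (simp add: mult_le_cancel_left)
        next
          case False
          then have "Y i = Y' i" "X' i = X i" by (simp_all add: Y_def X'_def)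
          then show ?thesis using Y' \<open>i < m\<close> by metis
        qed
      qed
      moreover have "same_type Y m"
        unfolding same_type_def
      proof (intro allI impI, elim conjE)
        fix g :: "'d option \<Rightarrow> nat" and z z'
        assume g: "inj g" "range g \<subseteq> {..<m}"
        have red: "\<exists>y. (\<forall>k. y k \<in> Y' (g k)) \<and> orientation z = orientation y"
          if zY: "\<forall>k. z k \<in> Y (g k)" for z
        proof -
          define pick where "pick = (\<lambda>x. SOME p. p \<in> C x \<and> p \<in> Y' 0)"
          define y where "y = (\<lambda>k. if g k = 0 then pick (z k) else z k)"
          have pk: "pick (z k) \<in> C (z k) \<and> pick (z k) \<in> Y' 0 \<and> z k \<in> X 0" if "g k = 0" for k
          proof -
            have zz: "z k \<in> X 0 \<and> C (z k) \<inter> Y' 0 \<noteq> {}" using zY[rule_format, of k] that by (auto simp: Y_def)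
            then have "\<exists>p. p \<in> C (z k) \<and> p \<in> Y' 0" by blast
            then show ?thesis unfolding pick_def using zz by (metis (mono_tags, lifting) someI_ex)
          qed
          have yY: "\<forall>k. y k \<in> Y' (g k)"
          proof
            fix k show "y k \<in> Y' (g k)"
              using pk[of k] zY[rule_format, of k] by (cases "g k = 0") (auto simp: y_def Y_def)
          qed
          have "orientation z = orientation y"
          proof (cases "\<exists>k0. g k0 = 0")
            case True
            then obtain k0 where k0: "g k0 = 0" by blast
            have "y = z(k0 := y k0)"
            proof
              fix k show "y k = (z(k0 := y k0)) k"
                using k0 g(1) injD[OF g(1), of k k0] by (cases "k = k0") (auto simp: y_def)
            qed
            moreover have "orientation (z(k0 := y k0)) = orientation z"
            proof (rule K)
              show "inj z" "range z \<subseteq> U"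
                using transversal_inj[OF assms(3) YX g zY] by (simp_all add: U_def)
              show "dist (y k0) (z k0) < \<delta>" using H pk[OF k0] k0 by (auto simp: y_def)
            qed
            ultimately show ?thesis by simp
          next
            case False
            have "y = z"
            proof
              fix k
              have "g k \<noteq> 0" using False by simp
              then show "y k = z k" by (simp add: y_def)
            qed
            then show ?thesis by simp
          qed
          then show ?thesis using yY by blast
        qed
        assume "\<forall>k. z k \<in> Y (g k)" "\<forall>k. z' k \<in> Y (g k)"
        then obtain y y' where "\<forall>k. y k \<in> Y' (g k)" "orientation z = orientation y"
           "\<forall>k. y' k \<in> Y' (g k)" "orientation z' = orientation y'" using red by meson
        then show "orientation z = orientation z'" using st g unfolding same_type_def by metis
      qed
      ultimately show "\<exists>Y. (\<forall>i<m. Y i \<subseteq> X i \<and> real (card (Y i)) \<ge> c * real (card (X i))) \<and> same_type Y m"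
        by blast
    qed
    show "same_type_const X m = same_type_const X' m"
      unfolding same_type_const_def by (simp only: eqv)
  qed
qed

end
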